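(* There are exactly $15$ complete number-conserving $3$-state $3$-neighbor vector-valued fuzzy cellular automaton rules, i.e. exactly 15 local rules $f$ for which $\nu^t(k)$ is an additive conserved quantity for every $k=1,2,3$. Their local rules $f(\bm{x},\bm{y},\bm{z})$ are: $(y_1,y_2,y_3)^\top$; $(z_1,z_2,z_3)^\top$; $(x_1,x_2,x_3)^\top$; $(x_1y_2+y_1z_1+y_1z_3,\ x_2y_2+x_3y_2+y_1z_2,\ y_3)^\top$; $(x_1y_3+y_1z_1+y_1z_2,\ y_2,\ x_2y_3+x_3y_3+y_1z_3)^\top$; $(y_1,\ x_2y_3+y_2z_1+y_2z_2,\ x_1y_3+x_3y_3+y_2z_3)^\top$; $(y_1,\ x_1y_2+x_2y_2+y_3z_2,\ x_3y_2+y_3z_1+y_3z_3)^\top$; $(x_1y_1+x_2y_1+y_3z_1,\ y_2,\ x_3y_1+y_3z_2+y_3z_3)^\top$; $(x_1y_1+x_3y_1+y_2z_1,\ x_2y_1+y_2z_2+y_2z_3,\ y_3)^\top$; $(x_1y_2+x_1y_3+y_1z_1,\ x_2y_2+x_3y_2+y_1z_2,\ x_2y_3+x_3y_3+y_1z_3)^\top$; $(x_1y_2+y_1z_1+y_1z_3,\ x_2y_2+y_1z_2+y_3z_2,\ x_3y_2+y_3z_1+y_3z_3)^\top$; $(x_1y_3+y_1z_1+y_1z_2,\ x_2y_3+y_2z_1+y_2z_2,\ x_3y_3+y_1z_3+y_2z_3)^\top$; $(x_1y_1+x_2y_1+y_3z_1,\ x_1y_2+x_2y_2+y_3z_2,\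 x_3y_1+x_3y_2+y_3z_3)^\top$; $(x_1y_1+x_3y_1+y_2z_1,\ x_2y_1+x_2y_3+y_2z_2,\ x_1y_3+x_3y_3+y_2z_3)^\top$; $(x_1y_1+y_2z_1+y_3z_1,\ x_2y_1+y_2z_2+y_2z_3,\ x_3y_1+y_3z_2+y_3z_3)^\top$.
   Context: Let $\bm{e}_1,\bm{e}_2,\bm{e}_3$ be the standard basis of $\mathbb{R}^3$ and $\Delta=\{(x_1,x_2,x_3)^{\top}\mid x_1+x_2+x_3=1,\ x_i\ge0\}$. A $3$-state $3$-neighbor vector-valued fuzzy cellular automaton ($3$-VFCA) has cells $i\in\mathbb{Z}$ with states $\bm{x}_i^t\in\Delta$, $t\in\mathbb{Z}_{\ge0}$, evolving by $\bm{x}_i^{t+1}=f(\bm{x}_{i-1}^t,\bm{x}_i^t,\bm{x}_{i+1}^t)$, where the local rule has the form $f(\bm{x},\bm{y},\bm{z})=\sum_{j,k,\ell=1}^3x_jy_kz_\ell\,h(\bm{e}_j,\bm{e}_k,\bm{e}_\ell)$ for some map $h:\{\bm{e}_1,\bm{e}_2,\bm{e}_3\}^3\to\{\bm{e}_1,\bm{e}_2,\bm{e}_3\}$ (so rules are in bijection with such $h$; here $\bm{x}=(x_1,x_2,x_3)^\top$ etc.). Consider $L$-periodic configurations ($\bm{x}_i^t=\bm{x}_{i+L}^t$, $L$ a positive integer) and $\nu^t(k)=\sum_{i=1}^L[\bm{x}_i^t]_k$, where $[\bm{x}]_k$ is the $k$th entry. $\nu^t(k)$ is an additive conserved quantity if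 $\nu^{t+1}(k)=\nu^t(k)$ for all $t$ and every periodic initial configuration in $\Delta$ (of every period $L$). A rule is complete number-conserving if this holds for all $k=1,2,3$. *)

theory Defs
  imports Complex_Main
begin

text \<open>The three states; a state vector is a function st => real, entry k being [x]_k.\<close>
datatype st = S1 | S2 | S3

lemma UNIV_st: "(UNIV :: st set) = {S1, S2, S3}"
  using st.exhaust by auto

instance st :: finite
  by standard (simp add: UNIV_st)

type_synonym vec = "st \<Rightarrow> real"

definition Delta :: "vec set" where
  "Delta = {x. (\<forall>k. 0 \<le> x k) \<and> (\<Sum>k\<in>UNIV. x k) = 1}"

text \<open>Local rule induced by h : {e1,e2,e3}^3 -> {e1,e2,e3}
  (h is encoded on indices: h j k l = m means h(e_j,e_k,e_l) = e_m).\<close>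
definition local_rule :: "(st \<Rightarrow> st \<Rightarrow> st \<Rightarrow> st) \<Rightarrow> vec \<Rightarrow> vec \<Rightarrow> vec \<Rightarrow> vec" where
  "local_rule h x y z = (\<lambda>m. \<Sum>j\<in>UNIV. \<Sum>k\<in>UNIV. \<Sum>l\<in>UNIV.
      x j * y k * z l * (if h j k l = m then 1 else 0))"

definition step :: "(st \<Rightarrow> st \<Rightarrow> st \<Rightarrow> st) \<Rightarrow> (int \<Rightarrow> vec) \<Rightarrow> (int \<Rightarrow> vec)" where
  "step h c = (\<lambda>i. local_rule h (c (i - 1)) (c i) (c (i + 1)))"

definition evol :: "(st \<Rightarrow> st \<Rightarrow> st \<Rightarrow> st) \<Rightarrow> (int \<Rightarrow> vec) \<Rightarrow> nat \<Rightarrow> (int \<Rightarrow> vec)" where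
  "evol h c t = (step h ^^ t) c"

definition nu :: "nat \<Rightarrow> (int \<Rightarrow> vec) \<Rightarrow> st \<Rightarrow> real" where
  "nu L c k = (\<Sum>i\<in>{1..int L}. c i k)"

definition additive_conserved :: "(st \<Rightarrow> st \<Rightarrow> st \<Rightarrow> st) \<Rightarrow> st \<Rightarrow> bool" where
  "additive_conserved h k \<longleftrightarrow>
     (\<forall>L::nat. L > 0 \<longrightarrow> (\<forall>c. (\<forall>i. c i \<in> Delta) \<and> (\<forall>i. c (i + int L) = c i) \<longrightarrow>
        (\<forall>t. nu L (evol h c (Suc t)) k = nu L (evol h c t) k)))"

definition complete_nc :: "(st \<Rightarrow> st \<Rightarrow> st \<Rightarrow> st) \<Rightarrow> bool" where
  "complete_nc h \<longleftrightarrow> (\<forall>k. additive_conserved h k)"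

definition vec3 :: "real \<Rightarrow> real \<Rightarrow> real \<Rightarrow> vec" where
  "vec3 a b c = (\<lambda>s. case s of S1 \<Rightarrow> a | S2 \<Rightarrow> b | S3 \<Rightarrow> c)"

definition listed_rules :: "(vec \<Rightarrow> vec \<Rightarrow> vec \<Rightarrow> vec) list" where
  "listed_rules = [
   (\<lambda>x y z. vec3 (y S1) (y S2) (y S3)),
   (\<lambda>x y z. vec3 (z S1) (z S2) (z S3)),
   (\<lambda>x y z. vec3 (x S1) (x S2) (x S3)),
   (\<lambda>x y z. vec3 (x S1*y S2 + y S1*z S1 + y S1*z S3) (x S2*y S2 + x S3*y S2 + y S1*z S2) (y S3)),
   (\<lambda>x y z. vec3 (x S1*y S3 + y S1*z S1 + y S1*z S2) (y S2) (x S2*y S3 + x S3*y S3 + y S1*z S3)),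
   (\<lambda>x y z. vec3 (y S1) (x S2*y S3 + y S2*z S1 + y S2*z S2) (x S1*y S3 + x S3*y S3 + y S2*z S3)),
   (\<lambda>x y z. vec3 (y S1) (x S1*y S2 + x S2*y S2 + y S3*z S2) (x S3*y S2 + y S3*z S1 + y S3*z S3)),
   (\<lambda>x y z. vec3 (x S1*y S1 + x S2*y S1 + y S3*z S1) (y S2) (x S3*y S1 + y S3*z S2 + y S3*z S3)),
   (\<lambda>x y z. vec3 (x S1*y S1 + x S3*y S1 + y S2*z S1) (x S2*y S1 + y S2*z S2 + y S2*z S3) (y S3)),
   (\<lambda>x y z. vec3 (x S1*y S2 + x S1*y S3 + y S1*z S1) (x S2*y S2 + x S3*y S2 + y S1*z S2) (x S2*y S3 + x S3*y S3 + y S1*z S3)),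
   (\<lambda>x y z. vec3 (x S1*y S2 + y S1*z S1 + y S1*z S3) (x S2*y S2 + y S1*z S2 + y S3*z S2) (x S3*y S2 + y S3*z S1 + y S3*z S3)),
   (\<lambda>x y z. vec3 (x S1*y S3 + y S1*z S1 + y S1*z S2) (x S2*y S3 + y S2*z S1 + y S2*z S2) (x S3*y S3 + y S1*z S3 + y S2*z S3)),
   (\<lambda>x y z. vec3 (x S1*y S1 + x S2*y S1 + y S3*z S1) (x S1*y S2 + x S2*y S2 + y S3*z S2) (x S3*y S1 + x S3*y S2 + y S3*z S3)),
   (\<lambda>x y z. vec3 (x S1*y S1 + x S3*y S1 + y S2*z S1) (x S2*y S1 + x S2*y S3 + y S2*z S2) (x S1*y S3 + x S3*y S3 + y S2*z S3)),
   (\<lambda>x y z. vec3 (x S1*y S1 + y S2*z S1 + y S3*z S1) (x S2*y S1 + y S2*z S2 + y S2*z S3) (x S3*y S1 + y S3*z S2 + y S3*z S3))]"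

text \<open>Two rules are the same rule iff they agree on Delta^3 (their domain).\<close>
definition same_on_Delta :: "(vec \<Rightarrow> vec \<Rightarrow> vec \<Rightarrow> vec) \<Rightarrow> (vec \<Rightarrow> vec \<Rightarrow> vec \<Rightarrow> vec) \<Rightarrow> bool" where
  "same_on_Delta f g \<longleftrightarrow> (\<forall>x\<in>Delta. \<forall>y\<in>Delta. \<forall>z\<in>Delta. f x y z = g x y z)"

end

theory Submission
  imports Defs
begin


definition sts :: "st list" where "sts = [S1,S2,S3]"
definition ordr :: "(st*st*st) list" where "ordr = [(S1,S1,S1),(S2,S2,S2),(S3,S3,S3),(S1,S2,S1),(S2,S1,S2),(S1,S3,S1),(S3,S1,S3),(S2,S3,S2),(S3,S2,S3),(S1,S1,S2),(S2,S1,S1),(S1,S1,S3),(S3,S1,S1),(S1,S2,S2),(S2,S2,S1),(S1,S2,S3),(S2,S3,S1),(S1,S3,S2),(S3,S2,S1),(S2,S1,S3),(S3,S1,S2),(S2,S2,S3),(S3,S2,S2),(S1,S3,S3),(S3,S3,S1),(S2,S3,S3),(S3,S3,S2)]"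
definition tabh :: "(st \<Rightarrow> st \<Rightarrow> st \<Rightarrow> st) \<Rightarrow> st list" where "tabh h = map (\<lambda>(a,b,c). h a b c) ordr"
definition trip :: "st list \<Rightarrow> nat \<Rightarrow> st*st*st" where
  "trip w j = (w ! ((j + length w - 1) mod length w), w ! j, w ! ((j+1) mod length w))"
definition okw :: "(st*st*st \<Rightarrow> st) \<Rightarrow> st list \<Rightarrow> bool" where
  "okw v w = (\<forall>k\<in>set sts. sum_list (map (\<lambda>j. if v (trip w j) = k then 1 else 0::nat) [0..<length w])
       = sum_list (map (\<lambda>j. if w!j = k then 1 else 0) [0..<length w]))"
definition Ws :: "st list list" where "Ws = [[S1],[S2],[S3],[S1,S1],[S1,S2],[S1,S3],[S2,S2],[S2,S3],[S3,S3],[S1,S1,S1],[S1,S1,S2],[S1,S1,S3],[S1,S2,S2],[S1,S2,S3],[S1,S3,S2],[S1,S3,S3],[S2,S2,S2],[S2,S2,S3],[S2,S3,S3],[S3,S3,S3],[S1,S1,S1,S1],[S1,S1,S1,S2],[S1,S1,S1,S3],[S1,S1,S2,S2],[S1,S1,S2,S3],[S1,S1,S3,S2],[S1,S1,S3,S3],[S1,S2,S1,S2],[S1,S2,S1,S3],[S1,S2,S2,S2],[S1,S2,S2,S3],[S1,S2,S3,S2],[S1,S2,S3,S3],[S1,S3,S1,S3],[S1,S3,S2,S2],[S1,S3,S2,S3],[S1,S3,S3,S2],[S1,S3,S3,S3],[S2,S2,S2,S2],[S2,S2,S2,S3],[S2,S2,S3,S3],[S2,S3,S2,S3],[S2,S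3,S3,S3],[S3,S3,S3,S3]]"
definition T15 :: "st list list" where "T15 = [[S1,S2,S3,S2,S1,S3,S1,S3,S2,S1,S1,S1,S1,S2,S2,S2,S3,S3,S2,S1,S1,S2,S2,S3,S3,S3,S3], [S1,S2,S3,S1,S2,S1,S3,S2,S3,S2,S1,S3,S1,S2,S1,S3,S1,S2,S1,S3,S2,S3,S2,S3,S1,S3,S2], [S1,S2,S3,S1,S2,S1,S3,S2,S3,S1,S2,S1,S3,S1,S2,S1,S2,S1,S3,S2,S3,S2,S3,S1,S3,S2,S3], [S1,S2,S3,S1,S2,S3,S1,S3,S2,S2,S1,S1,S1,S1,S2,S1,S3,S3,S2,S1,S2,S2,S2,S3,S3,S3,S3], [S1,S2,S3,S2,S1,S1,S3,S3,S2,S1,S1,S3,S1,S2,S2,S2,S3,S1,S2,S3,S1,S2,S2,S1,S3,S3,S3], [S1,S2,S3,S2,S1,S3,S1,S2,S3,S1,S1,S1,S1,S2,S2,S3,S2,S3,S2,S1,S1,S3,S2,S3,S3,S2,S3], [S1,S2,S3,S2,S1,S3,S1,S2,S3,S1,S1,S1,S1,S2,S2,S2,S3,S2,S3,S1,S1,S2,S3,S3,S3,S3,S2], [S1,S2,S3,S2,S1,S1,S3,S3,S2,S1,S1,S1,S3,S2,S2,S2,S1,S3,S2,S1,S3,S2,S2,S3,S1,S3,S3], [S1,S2,S3,S1,S2,S3,S1,S3,S2,S1,S2,S1,S1,S2,S1,S2,S3,S3,S1,S2,S1,S2,S2,S3,S3,S3,S3], [S1,S2,S3,S1,S2,S1,S3,S3,S2,S2,S1,S3,S1,S1,S2,S1,S3,S1,S2,S3,S2,S2,S2,S1,S3,S3,S3],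 [S1,S2,S3,S1,S2,S3,S1,S2,S3,S2,S1,S1,S1,S1,S2,S1,S3,S2,S3,S1,S2,S2,S3,S3,S3,S3,S2], [S1,S2,S3,S2,S1,S1,S3,S2,S3,S1,S1,S3,S1,S2,S2,S3,S2,S1,S2,S3,S1,S3,S2,S1,S3,S2,S3], [S1,S2,S3,S2,S1,S1,S3,S2,S3,S1,S1,S1,S3,S2,S2,S2,S1,S2,S3,S1,S3,S2,S3,S3,S1,S3,S2], [S1,S2,S3,S1,S2,S3,S1,S2,S3,S1,S2,S1,S1,S2,S1,S3,S2,S3,S1,S2,S1,S3,S2,S3,S3,S2,S3], [S1,S2,S3,S1,S2,S1,S3,S3,S2,S1,S2,S1,S3,S2,S1,S2,S1,S3,S1,S2,S3,S2,S2,S3,S1,S3,S3]]"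

lemma search:
  assumes "\<forall>w\<in>set Ws. okw (\<lambda>(a,b,c). h a b c) w"
  shows "tabh h \<in> set T15"
  using assms
  apply (simp add: Ws_def okw_def sts_def trip_def upt_rec)
  apply (cases "h S1 S1 S1")
  apply simp_all
  apply (case_tac [!] "h S2 S2 S2")
  apply simp_all
  apply (case_tac [!] "h S3 S3 S3")
  apply simp_all
  apply (case_tac [!] "h S1 S2 S1")
  apply simp_all
  apply (case_tac [!] "h S2 S1 S2")
  apply simp_all
  apply (case_tac [!] "h S1 S3 S1")
  apply simp_all
  apply (case_tac [!] "h S3 S1 S3")
  apply simp_all
  apply (case_tac [!] "h S2 S3 S2")
  apply simp_all
  apply (case_tac [!] "h S3 S2 S3")
  apply simp_all
  apply (case_tac [!] "h S1 S1 S2")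
  apply simp_all
  apply (case_tac [!] "h S2 S1 S1")
  apply simp_all
  apply (case_tac [!] "h S1 S1 S3")
  apply simp_all
  apply (case_tac [!] "h S3 S1 S1")
  apply simp_all
  apply (case_tac [!] "h S1 S2 S2")
  apply simp_all
  apply (case_tac [!] "h S2 S2 S1")
  apply simp_all
  apply (case_tac [!] "h S1 S2 S3")
  apply simp_all
  apply (case_tac [!] "h S2 S3 S1")
  apply simp_all
  apply (case_tac [!] "h S1 S3 S2")
  apply simp_all
  apply (case_tac [!] "h S3 S2 S1")
  apply simp_all
  apply (case_tac [!] "h S2 S1 S3")
  apply simp_all
  apply (case_tac [!] "h S3 S1 S2")
  apply simp_all
  apply (case_tac [!] "h S2 S2 S3")
  apply simp_all
  apply (case_tac [!] "h S3 S2 S2")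
  apply simp_all
  apply (case_tac [!] "h S1 S3 S3")
  apply simp_all
  apply (case_tac [!] "h S3 S3 S1")
  apply simp_all
  apply (case_tac [!] "h S2 S3 S3")
  apply simp_all
  apply (case_tac [!] "h S3 S3 S2")
  apply simp_all
  apply (simp_all add: tabh_def ordr_def T15_def)
  done



definition ev :: "st \<Rightarrow> vec" where "ev s = (\<lambda>k. if k = s then 1 else 0)"

lemma ev_Delta: "ev s \<in> Delta"
  by (cases s) (auto simp: Delta_def ev_def UNIV_st)

lemma ev_sum: "(\<Sum>j\<in>UNIV. ev a j * (f j::real)) = f a"
proof -
  have "(\<Sum>j\<in>UNIV. ev a j * f j) = (\<Sum>j\<in>UNIV. if a = j then f j else 0)"
    by (rule sum.cong) (auto simp: ev_def)
  then show ?thesis by simp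
qed

lemma local_rule_ev: "local_rule h (ev a) (ev b) (ev c) = ev (h a b c)"
  unfolding local_rule_def
  by (simp add: mult.assoc sum_distrib_left[symmetric] ev_sum) (simp add: ev_def fun_eq_iff)
lemma sum_int_reindex: "(\<Sum>i\<in>{1..int n}. g i) = (\<Sum>j<n. g (int j + 1))"
proof (induction n)
  case 0 then show ?case by simp
next
  case (Suc n)
  have "{1..int (Suc n)} = insert (1 + int n) {1..int n}"
    using atLeastAtMostPlus1_int_conv[of 1 "int n"] by simp
  then show ?case using Suc by (simp add: add.commute)
qed

definition cw :: "st list \<Rightarrow> int \<Rightarrow> vec" where
  "cw w i = ev (w ! nat ((i - 1) mod int (length w)))"

lemma cw_Delta: "cw w i \<in> Delta" by (simp add: cw_def ev_Delta)

lemma cw_per: "cw w (i + int (length w)) = cw w i"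
proof -
  have "i + int (length w) - 1 = (i - 1) + int (length w)" by simp
  then show ?thesis unfolding cw_def by (metis mod_add_self2)
qed

lemma mod_aux1:
  assumes "j < L" shows "nat ((int j + 1 - 1) mod int L) = j"
  using assms by simp

lemma mod_aux2:
  assumes "j < L" shows "nat ((int j + 1 - 1 - 1) mod int L) = (j + L - 1) mod L"
proof -
  have "int ((j + L - 1) mod L) = int (j + L - 1) mod int L" by (simp add: zmod_int)
  also have "int (j + L - 1) = (int j - 1) + int L" using assms by simp
  also have "((int j - 1) + int L) mod int L = (int j - 1) mod int L" by (metis mod_add_self2)
  finally show ?thesis by simp
qed

lemma mod_aux3:
  assumes "j < L" shows "nat ((int j + 1 + 1 - 1) mod int L) = (j + 1) mod L"
proof -
  have "int ((j + 1) mod L) = int (j + 1) mod int L" by (simp add: zmod_int)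
  then show ?thesis by simp
qed




lemma step_cw:
  assumes "j < length w"
  shows "step h (cw w) (int j + 1) = ev ((\<lambda>(a,b,c). h a b c) (trip w j))"
proof -
  have "step h (cw w) (int j + 1) = local_rule h (cw w (int j + 1 - 1)) (cw w (int j + 1)) (cw w (int j + 1 + 1))"
    by (simp add: step_def)
  also have "cw w (int j + 1 - 1) = ev (w ! ((j + length w - 1) mod length w))"
    unfolding cw_def using mod_aux2[OF assms] by simp
  also have "cw w (int j + 1) = ev (w ! j)"
    unfolding cw_def using mod_aux1[OF assms] by simp
  also have "cw w (int j + 1 + 1) = ev (w ! ((j + 1) mod length w))"
    unfolding cw_def using mod_aux3[OF assms] by simp
  finally show ?thesis by (simp add: local_rule_ev trip_def)
qed

lemma word_okw:
  assumes nc: "complete_nc h" and ne: "w \<noteq> []"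
  shows "okw (\<lambda>(a,b,c). h a b c) w"
proof -
  define L where "L = length w"
  have L0: "L > 0" using ne by (simp add: L_def)
  have per: "\<forall>i. cw w (i + int L) = cw w i" using cw_per L_def by simp
  have D: "\<forall>i. cw w i \<in> Delta" using cw_Delta by simp
  have "\<forall>k. nu L (evol h (cw w) (Suc 0)) k = nu L (evol h (cw w) 0) k"
    using nc L0 per D unfolding complete_nc_def additive_conserved_def by blast
  then have E: "\<forall>k. nu L (step h (cw w)) k = nu L (cw w) k"
    by (simp add: evol_def)
  have S1: "nu L (step h (cw w)) k = (\<Sum>j<L. ev ((\<lambda>(a,b,c). h a b c) (trip w j)) k)" for k
    unfolding nu_def sum_int_reindex
    by (rule sum.cong[OF refl]) (simp add: step_cw L_def)
  have S2: "nu L (cw w) k = (\<Sum>j<L. ev (w ! j) k)" for k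
    unfolding nu_def sum_int_reindex
    by (rule sum.cong[OF refl]) (simp add: cw_def L_def[symmetric])
  show ?thesis
    unfolding okw_def
  proof
    fix k
    have evr: "\<And>s. ev s k = real (if s = k then 1 else 0)" by (simp add: ev_def)
    have "(\<Sum>j<L. ev ((\<lambda>(a,b,c). h a b c) (trip w j)) k) = (\<Sum>j<L. ev (w ! j) k)"
      using E S1 S2 by simp
    then have "real (\<Sum>j<L. if (\<lambda>(a,b,c). h a b c) (trip w j) = k then 1 else 0::nat)
       = real (\<Sum>j<L. if w ! j = k then 1 else 0::nat)"
      unfolding of_nat_sum using evr by simp
    then have "(\<Sum>j<L. if (\<lambda>(a,b,c). h a b c) (trip w j) = k then 1 else 0::nat)
       = (\<Sum>j<L. if w ! j = k then 1 else 0::nat)"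
      using of_nat_eq_iff by blast
    then show "sum_list (map (\<lambda>j. if (\<lambda>(a,b,c). h a b c) (trip w j) = k then 1 else 0::nat) [0..<length w])
       = sum_list (map (\<lambda>j. if w!j = k then 1 else 0) [0..<length w])"
      by (simp add: sum_set_upt_conv_sum_list_nat[symmetric] atLeast0LessThan L_def)
  qed
qed




lemma Delta_sum: "x \<in> Delta \<Longrightarrow> (\<Sum>k\<in>UNIV. x k) = 1" by (simp add: Delta_def)
lemma Delta_nn: "x \<in> Delta \<Longrightarrow> 0 \<le> x k" by (simp add: Delta_def)

lemma local_rule_Delta:
  assumes x: "x \<in> Delta" and y: "y \<in> Delta" and z: "z \<in> Delta"
  shows "local_rule h x y z \<in> Delta"
proof -
  have nn: "0 \<le> local_rule h x y z m" for m
    unfolding local_rule_def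
    by (intro sum_nonneg mult_nonneg_nonneg) (auto simp: Delta_nn x y z)
  have "(\<Sum>m\<in>UNIV. local_rule h x y z m)
      = (\<Sum>m\<in>UNIV. \<Sum>j\<in>UNIV. \<Sum>k\<in>UNIV. \<Sum>l\<in>UNIV. x j * y k * z l * (if h j k l = m then 1 else 0))"
    by (simp add: local_rule_def)
  also have "\<dots> = (\<Sum>j\<in>UNIV. \<Sum>m\<in>UNIV. \<Sum>k\<in>UNIV. \<Sum>l\<in>UNIV. x j * y k * z l * (if h j k l = m then 1 else 0))"
    by (rule sum.swap)
  also have "\<dots> = (\<Sum>j\<in>UNIV. \<Sum>k\<in>UNIV. \<Sum>m\<in>UNIV. \<Sum>l\<in>UNIV. x j * y k * z l * (if h j k l = m then 1 else 0))"
    by (rule sum.cong[OF refl], rule sum.swap)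
  also have "\<dots> = (\<Sum>j\<in>UNIV. \<Sum>k\<in>UNIV. \<Sum>l\<in>UNIV. \<Sum>m\<in>UNIV. x j * y k * z l * (if h j k l = m then 1 else 0))"
    by (rule sum.cong[OF refl], rule sum.cong[OF refl], rule sum.swap)
  also have "\<dots> = (\<Sum>j\<in>UNIV. \<Sum>k\<in>UNIV. \<Sum>l\<in>UNIV. x j * y k * z l)"
    by (simp add: sum_distrib_left[symmetric])
  also have "\<dots> = (\<Sum>j\<in>UNIV. x j * (\<Sum>k\<in>UNIV. y k * (\<Sum>l\<in>UNIV. z l)))"
    by (rule sum.cong[OF refl]) (simp add: sum_distrib_left mult.assoc)
  also have "\<dots> = (\<Sum>j\<in>UNIV. x j) * ((\<Sum>k\<in>UNIV. y k) * (\<Sum>l\<in>UNIV. z l))"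
    by (simp only: sum_distrib_right[symmetric])
  also have "\<dots> = (\<Sum>j\<in>UNIV. x j) * (\<Sum>k\<in>UNIV. y k) * (\<Sum>l\<in>UNIV. z l)"
    by (simp only: mult.assoc)
  also have "\<dots> = 1" using x y z by (simp add: Delta_sum)
  finally show ?thesis using nn by (simp add: Delta_def)
qed

definition Phi :: "(st \<Rightarrow> st \<Rightarrow> real) \<Rightarrow> vec \<Rightarrow> vec \<Rightarrow> real" where
  "Phi f x y = (\<Sum>a\<in>UNIV. \<Sum>b\<in>UNIV. x a * y b * f a b)"

lemma flux_form:
  assumes H: "\<And>a b c. (if h a b c = k then 1 else 0::real) = (if b = k then 1 else 0) + f a b - f b c"
    and x: "x \<in> Delta" and y: "y \<in> Delta" and z: "z \<in> Delta"
  shows "local_rule h x y z k = y k + Phi f x y - Phi f y z"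
proof -
  define I where "I l = (if l = k then 1 else 0::real)" for l
  have sx: "(\<Sum>j\<in>UNIV. x j) = 1" and sz: "(\<Sum>m\<in>UNIV. z m) = 1"
    using Delta_sum[OF x] Delta_sum[OF z] by simp_all
  have e1: "(\<Sum>m\<in>UNIV. x j * y l * z m * (I l + f j l - f l m))
      = x j * y l * I l + x j * y l * f j l - x j * (\<Sum>m\<in>UNIV. y l * z m * f l m)" for j l
  proof -
    have "(\<Sum>m\<in>UNIV. x j * y l * z m * (I l + f j l - f l m))
        = (\<Sum>m\<in>UNIV. (x j * y l * I l + x j * y l * f j l) * z m - x j * (y l * z m * f l m))"
      by (rule sum.cong) (simp_all add: algebra_simps)
    also have "\<dots> = (x j * y l * I l + x j * y l * f j l) * (\<Sum>m\<in>UNIV. z m) - x j * (\<Sum>m\<in>UNIV. y l * z m * f l m)"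
      by (simp add: sum_subtractf sum_distrib_left sum_distrib_right)
    finally show ?thesis using sz by simp
  qed
  have yk: "(\<Sum>l\<in>UNIV. y l * I l) = y k"
  proof -
    have "(\<Sum>l\<in>UNIV. y l * I l) = (\<Sum>l\<in>UNIV. if k = l then y l else 0)"
      by (rule sum.cong) (auto simp: I_def)
    then show ?thesis by simp
  qed
  have e2: "(\<Sum>l\<in>UNIV. x j * y l * I l + x j * y l * f j l - x j * (\<Sum>m\<in>UNIV. y l * z m * f l m))
      = x j * y k + (\<Sum>l\<in>UNIV. x j * y l * f j l) - x j * (\<Sum>l\<in>UNIV. \<Sum>m\<in>UNIV. y l * z m * f l m)" for j
  proof -
    have "(\<Sum>l\<in>UNIV. x j * y l * I l + x j * y l * f j l - x j * (\<Sum>m\<in>UNIV. y l * z m * f l m))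
       = x j * (\<Sum>l\<in>UNIV. y l * I l) + (\<Sum>l\<in>UNIV. x j * y l * f j l) - x j * (\<Sum>l\<in>UNIV. \<Sum>m\<in>UNIV. y l * z m * f l m)"
      by (simp add: sum.distrib sum_subtractf sum_distrib_left mult.assoc)
    then show ?thesis using yk by simp
  qed
  have "local_rule h x y z k = (\<Sum>j\<in>UNIV. \<Sum>l\<in>UNIV. \<Sum>m\<in>UNIV. x j * y l * z m * (I l + f j l - f l m))"
    by (simp add: local_rule_def H I_def)
  also have "\<dots> = (\<Sum>j\<in>UNIV. x j * y k + (\<Sum>l\<in>UNIV. x j * y l * f j l) - x j * (\<Sum>l\<in>UNIV. \<Sum>m\<in>UNIV. y l * z m * f l m))"
    by (simp add: e1 e2)
  also have "\<dots> = (\<Sum>j\<in>UNIV. x j) * y k + Phi f x y - (\<Sum>j\<in>UNIV. x j) * Phi f y z"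
    unfolding Phi_def by (simp add: sum.distrib sum_subtractf sum_distrib_right)
  also have "\<dots> = y k + Phi f x y - Phi f y z" using sx by simp
  finally show ?thesis .
qed




lemma tele: "(\<Sum>i\<in>{1..int n}. G (i - 1) - G i) = G 0 - (G (int n) :: real)"
proof (induction n)
  case 0 then show ?case by simp
next
  case (Suc n)
  have "{1..int (Suc n)} = insert (1 + int n) {1..int n}"
    using atLeastAtMostPlus1_int_conv[of 1 "int n"] by simp
  then show ?case using Suc by (simp add: add.commute)
qed

lemma nu_step:
  assumes H: "\<And>a b c. (if h a b c = k then 1 else 0::real) = (if b = k then 1 else 0) + f a b - f b c"
    and D: "\<forall>i. c i \<in> Delta" and per: "\<forall>i. c (i + int L) = c i"
  shows "nu L (step h c) k = nu L c k"
proof -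
  define G where "G i = Phi f (c i) (c (i + 1))" for i
  have "nu L (step h c) k = (\<Sum>i\<in>{1..int L}. c i k + (G (i - 1) - G i))"
    unfolding nu_def step_def
    by (rule sum.cong[OF refl]) (simp add: flux_form[OF H] D G_def)
  also have "\<dots> = nu L c k + (G 0 - G (int L))"
    by (simp add: sum.distrib tele nu_def)
  also have "G (int L) = G 0"
    unfolding G_def using per[rule_format, of 0] per[rule_format, of 1] by (simp add: add.commute)
  finally show ?thesis by simp
qed

lemma step_inv:
  assumes D: "\<forall>i. c i \<in> Delta" and per: "\<forall>i. c (i + int L) = c i"
  shows "(\<forall>i. step h c i \<in> Delta) \<and> (\<forall>i. step h c (i + int L) = step h c i)"
proof (intro conjI allI)
  fix i
  show "step h c i \<in> Delta" unfolding step_def using D by (simp add: local_rule_Delta)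
  have "c (i + int L - 1) = c (i - 1)" using per[rule_format, of "i - 1"] by (simp add: algebra_simps)
  moreover have "c (i + int L + 1) = c (i + 1)" using per[rule_format, of "i + 1"] by (simp add: algebra_simps)
  ultimately show "step h c (i + int L) = step h c i"
    unfolding step_def using per by simp
qed

lemma evol_inv:
  assumes D: "\<forall>i. c i \<in> Delta" and per: "\<forall>i. c (i + int L) = c i"
  shows "(\<forall>i. evol h c t i \<in> Delta) \<and> (\<forall>i. evol h c t (i + int L) = evol h c t i)"
proof (induction t)
  case 0 then show ?case using D per by (simp add: evol_def)
next
  case (Suc t)
  have "evol h c (Suc t) = step h (evol h c t)" by (simp add: evol_def)
  then show ?case using step_inv[of "evol h c t" L h] Suc by simp
qed

definition ind :: "bool \<Rightarrow> int" where "ind b = (if b then 1 else 0)"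
definition psi :: "(st \<Rightarrow> st \<Rightarrow> st \<Rightarrow> st) \<Rightarrow> st \<Rightarrow> st \<Rightarrow> st \<Rightarrow> st \<Rightarrow> int" where
  "psi h k a b c = ind (h a b c = k) - ind (b = k)"
definition phi :: "(st \<Rightarrow> st \<Rightarrow> st \<Rightarrow> st) \<Rightarrow> st \<Rightarrow> st \<Rightarrow> st \<Rightarrow> int" where
  "phi h k a b = - psi h k S1 S1 a - psi h k S1 a b"
definition ncchk :: "(st \<Rightarrow> st \<Rightarrow> st \<Rightarrow> st) \<Rightarrow> bool" where
  "ncchk h = (\<forall>k\<in>set sts. \<forall>a\<in>set sts. \<forall>b\<in>set sts. \<forall>c\<in>set sts. psi h k a b c = phi h k a b - phi h k b c)"

lemma set_sts: "set sts = UNIV" by (simp add: sts_def UNIV_st)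

lemma ncchk_complete:
  assumes "ncchk h" shows "complete_nc h"
  unfolding complete_nc_def additive_conserved_def
proof (intro allI impI)
  fix k and L :: nat and c and t
  assume "0 < L" and cc: "(\<forall>i. c i \<in> Delta) \<and> (\<forall>i. c (i + int L) = c i)"
  have H: "(if h a b d = k then 1 else 0::real) = (if b = k then 1 else 0) + real_of_int (phi h k a b) - real_of_int (phi h k b d)" for a b d
  proof -
    have "psi h k a b d = phi h k a b - phi h k b d" using assms by (simp add: ncchk_def set_sts)
    then have "real_of_int (psi h k a b d) = real_of_int (phi h k a b) - real_of_int (phi h k b d)" by simp
    then show ?thesis by (simp add: psi_def ind_def split: if_splits)
  qed
  have I: "(\<forall>i. evol h c t i \<in> Delta) \<and> (\<forall>i. evol h c t (i + int L) = evol h c t i)"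
    using evol_inv cc by blast
  have "evol h c (Suc t) = step h (evol h c t)" by (simp add: evol_def)
  then show "nu L (evol h c (Suc t)) k = nu L (evol h c t) k"
    using nu_step[OF H] I by simp
qed




definition posn :: "st*st*st \<Rightarrow> nat" where "posn t = length (takeWhile (\<lambda>u. u \<noteq> t) ordr)"
definition tabfun :: "st list \<Rightarrow> st \<Rightarrow> st \<Rightarrow> st \<Rightarrow> st" where "tabfun p a b c = p ! posn (a,b,c)"

lemma posn_0: "posn (S1,S1,S1) = 0" by (simp add: posn_def ordr_def)
lemma posn_1: "posn (S2,S2,S2) = 1" by (simp add: posn_def ordr_def)
lemma posn_2: "posn (S3,S3,S3) = 2" by (simp add: posn_def ordr_def)
lemma posn_3: "posn (S1,S2,S1) = 3" by (simp add: posn_def ordr_def)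
lemma posn_4: "posn (S2,S1,S2) = 4" by (simp add: posn_def ordr_def)
lemma posn_5: "posn (S1,S3,S1) = 5" by (simp add: posn_def ordr_def)
lemma posn_6: "posn (S3,S1,S3) = 6" by (simp add: posn_def ordr_def)
lemma posn_7: "posn (S2,S3,S2) = 7" by (simp add: posn_def ordr_def)
lemma posn_8: "posn (S3,S2,S3) = 8" by (simp add: posn_def ordr_def)
lemma posn_9: "posn (S1,S1,S2) = 9" by (simp add: posn_def ordr_def)
lemma posn_10: "posn (S2,S1,S1) = 10" by (simp add: posn_def ordr_def)
lemma posn_11: "posn (S1,S1,S3) = 11" by (simp add: posn_def ordr_def)
lemma posn_12: "posn (S3,S1,S1) = 12" by (simp add: posn_def ordr_def)
lemma posn_13: "posn (S1,S2,S2) = 13" by (simp add: posn_def ordr_def)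
lemma posn_14: "posn (S2,S2,S1) = 14" by (simp add: posn_def ordr_def)
lemma posn_15: "posn (S1,S2,S3) = 15" by (simp add: posn_def ordr_def)
lemma posn_16: "posn (S2,S3,S1) = 16" by (simp add: posn_def ordr_def)
lemma posn_17: "posn (S1,S3,S2) = 17" by (simp add: posn_def ordr_def)
lemma posn_18: "posn (S3,S2,S1) = 18" by (simp add: posn_def ordr_def)
lemma posn_19: "posn (S2,S1,S3) = 19" by (simp add: posn_def ordr_def)
lemma posn_20: "posn (S3,S1,S2) = 20" by (simp add: posn_def ordr_def)
lemma posn_21: "posn (S2,S2,S3) = 21" by (simp add: posn_def ordr_def)
lemma posn_22: "posn (S3,S2,S2) = 22" by (simp add: posn_def ordr_def)
lemma posn_23: "posn (S1,S3,S3) = 23" by (simp add: posn_def ordr_def)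
lemma posn_24: "posn (S3,S3,S1) = 24" by (simp add: posn_def ordr_def)
lemma posn_25: "posn (S2,S3,S3) = 25" by (simp add: posn_def ordr_def)
lemma posn_26: "posn (S3,S3,S2) = 26" by (simp add: posn_def ordr_def)
lemmas posn_simps = posn_0 posn_1 posn_2 posn_3 posn_4 posn_5 posn_6 posn_7 posn_8 posn_9 posn_10 posn_11 posn_12 posn_13 posn_14 posn_15 posn_16 posn_17 posn_18 posn_19 posn_20 posn_21 posn_22 posn_23 posn_24 posn_25 posn_26

lemma posn_ok: "posn t < length ordr \<and> ordr ! posn t = t"
proof -
  obtain a b c where t: "t = (a,b,c)" by (cases t) auto
  show ?thesis unfolding t by (cases a; cases b; cases c) (simp_all add: posn_simps ordr_def)
qed

lemma tabh_nth: "tabh h ! posn (a,b,c) = h a b c"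
  using posn_ok[of "(a,b,c)"] by (simp add: tabh_def)

lemma tabfun_tabh: "tabfun (tabh h) = h"
  by (simp add: fun_eq_iff tabfun_def tabh_nth)

lemma T15_fix: "\<forall>p\<in>set T15. tabh (tabfun p) = p"
  by (simp add: T15_def tabh_def tabfun_def ordr_def posn_simps)

lemma T15_nc: "\<forall>p\<in>set T15. ncchk (tabfun p)"
  by (simp add: T15_def ncchk_def sts_def psi_def phi_def ind_def tabfun_def posn_simps)

lemma T15_card: "card (set T15) = 15"
  by (simp add: T15_def)

lemma Ws_ne: "\<forall>w\<in>set Ws. w \<noteq> []" by (simp add: Ws_def)

lemma set_eq: "{h. complete_nc h} = tabfun ` set T15"
proof
  show "{h. complete_nc h} \<subseteq> tabfun ` set T15"
  proof
    fix h assume "h \<in> {h. complete_nc h}"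
    then have nc: "complete_nc h" by simp
    have "\<forall>w\<in>set Ws. okw (\<lambda>(a,b,c). h a b c) w" using word_okw[OF nc] Ws_ne by blast
    then have "tabh h \<in> set T15" by (rule search)
    then show "h \<in> tabfun ` set T15" using tabfun_tabh[of h] by (metis image_eqI)
  qed
  show "tabfun ` set T15 \<subseteq> {h. complete_nc h}"
    using T15_nc ncchk_complete by blast
qed

lemma card_main: "card {h. complete_nc h} = 15"
proof -
  have "inj_on tabfun (set T15)" by (rule inj_on_inverseI[where g = tabh]) (use T15_fix in blast)
  then show ?thesis unfolding set_eq using T15_card by (simp add: card_image)
qed




lemma Delta_vec3: "x \<in> Delta \<Longrightarrow> x = vec3 (x S1) (x S2) (1 - x S1 - x S2)"
  by (auto simp: fun_eq_iff vec3_def Delta_def UNIV_st split: st.split)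

lemma same_intro:
  assumes "\<And>x1 x2 y1 y2 z1 z2 m. f (vec3 x1 x2 (1-x1-x2)) (vec3 y1 y2 (1-y1-y2)) (vec3 z1 z2 (1-z1-z2)) m
     = g (vec3 x1 x2 (1-x1-x2)) (vec3 y1 y2 (1-y1-y2)) (vec3 z1 z2 (1-z1-z2)) m"
  shows "same_on_Delta f g"
  unfolding same_on_Delta_def
proof (intro ballI)
  fix x y z assume "x \<in> Delta" "y \<in> Delta" "z \<in> Delta"
  then show "f x y z = g x y z"
    using assms Delta_vec3 by (metis ext)
qed

lemma listed_ok: "list_all2 (\<lambda>p F. same_on_Delta (local_rule (tabfun p)) F) T15 listed_rules"
  unfolding T15_def listed_rules_def list_all2_Cons list_all2_Nil
  apply (intro conjI TrueI same_intro)
  apply (simp_all add: local_rule_def UNIV_st tabfun_def posn_simps vec3_def split: st.split)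
  apply safe
  apply (simp_all add: algebra_simps)
  done




theorem mainTheorem4:
  shows "card {h. complete_nc h} = 15
    \<and> (\<forall>h. complete_nc h \<longrightarrow> (\<exists>F\<in>set listed_rules. same_on_Delta (local_rule h) F))
    \<and> (\<forall>F\<in>set listed_rules. \<exists>h. complete_nc h \<and> same_on_Delta (local_rule h) F)"
proof (intro conjI allI impI ballI)
  have LA: "length T15 = length listed_rules"
    and LN: "\<And>i. i < length T15 \<Longrightarrow> same_on_Delta (local_rule (tabfun (T15 ! i))) (listed_rules ! i)"
    using listed_ok by (simp_all add: list_all2_conv_all_nth)
  show "card {h. complete_nc h} = 15" by (rule card_main)
  fix h assume "complete_nc h"
  then have "h \<in> tabfun ` set T15" using set_eq by blast
  then obtain i where i: "i < length T15" and h: "h = tabfun (T15 ! i)" by (auto simp: in_set_conv_nth)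
  show "\<exists>F\<in>set listed_rules. same_on_Delta (local_rule h) F"
    using LN[OF i] LA i h by (metis nth_mem)
next
  have LA: "length T15 = length listed_rules"
    and LN: "\<And>i. i < length T15 \<Longrightarrow> same_on_Delta (local_rule (tabfun (T15 ! i))) (listed_rules ! i)"
    using listed_ok by (simp_all add: list_all2_conv_all_nth)
  fix F assume "F \<in> set listed_rules"
  then obtain i where i: "i < length listed_rules" and F: "F = listed_rules ! i" by (auto simp: in_set_conv_nth)
  have "complete_nc (tabfun (T15 ! i))" using set_eq LA i by (metis (mono_tags, lifting) image_eqI mem_Collect_eq nth_mem)
  then show "\<exists>h. complete_nc h \<and> same_on_Delta (local_rule h) F"
    using LN LA i F by metis
qed


end
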